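(* Let $t\in[n]$ and let $S\subseteq N$ be a maximal $t$-switchable set in which all elements are pairwise connected in $S$. Then $S=N$.
   Context: Fix positive integers $n, r_1,\dots,r_n$, let $N=[r_1]\times\cdots\times[r_n]$, and let $R$ be the polynomial ring over a field in the variables $x_a$, $a\in N$. For $a,b\in N$ and $i\in[n]$, ${\rm s}(i,a,b)\in N$ has $i$-th component $b_i$ and other components equal to those of $a$. Let $d(a,b)=\#\{j: a_j\neq b_j\}$ and $f_{i,a,b}=x_ax_b-x_{{\rm s}(i,a,b)}x_{{\rm s}(i,b,a)}$. A subset $S\subseteq N$ is $t$-switchable if for all $a,b\in S$ with $d(a,b)=2$ and all $i\in[t]$, ${\rm s}(i,a,b)\in S$. Elements $a,b\in S$ are connected in $S$ if there are $a_0=a,\dots,a_k=b$ in $S$ with $d(a_{j-1},a_j)\le 1$ for all $j$. For $t$-switchable $S$: $\tilde{\mathcal{I}}^{\langle t\rangle}_S=(f_{i,a,b}: i\in[t],\ a,b \text{ connected in } S)$, $\mathrm{Var}^{\langle t\rangle}_S=(x_a: a\notin S)$, $P^{\langle t\rangle}_S=\mathrm{Var}^{\langle t\rangle}_S+\tilde{\mathcal{I}}^{\langle t\rangle}_S$. A $t$-switchable $S$ is maximal $t$-switchable if for every $t$-switchable $T$ properly containing $S$, $P^{\langle t\rangle}_S$ and $P^{\langle t\rangle}_T$ are incomparable under inclusion. *)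

theory Defs
  imports Main "HOL-Library.Poly_Mapping"
begin

text \<open>Elements of N = [r_1] x ... x [r_n] are encoded as functions nat => nat
  that vanish outside {1..n}.\<close>
definition grid :: "nat \<Rightarrow> (nat \<Rightarrow> nat) \<Rightarrow> (nat \<Rightarrow> nat) set" where
  "grid n r = {a. (\<forall>i\<in>{1..n}. 1 \<le> a i \<and> a i \<le> r i) \<and> (\<forall>i. i \<notin> {1..n} \<longrightarrow> a i = 0)}"

definition sw :: "nat \<Rightarrow> (nat \<Rightarrow> nat) \<Rightarrow> (nat \<Rightarrow> nat) \<Rightarrow> (nat \<Rightarrow> nat)" where
  "sw i a b = a(i := b i)"

definition hdist :: "nat \<Rightarrow> (nat \<Rightarrow> nat) \<Rightarrow> (nat \<Rightarrow> nat) \<Rightarrow> nat" where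
  "hdist n a b = card {j\<in>{1..n}. a j \<noteq> b j}"

text \<open>Polynomials over the field 'k in the variables x_a (a :: nat => nat).\<close>
type_synonym 'k gpoly = "((nat \<Rightarrow> nat) \<Rightarrow>\<^sub>0 nat) \<Rightarrow>\<^sub>0 'k"

definition Xv :: "(nat \<Rightarrow> nat) \<Rightarrow> 'k::field gpoly" where
  "Xv a = Poly_Mapping.single (Poly_Mapping.single a 1) 1"

definition polyring :: "nat \<Rightarrow> (nat \<Rightarrow> nat) \<Rightarrow> 'k::field gpoly set" where
  "polyring n r = {p. \<forall>m\<in>Poly_Mapping.keys p. Poly_Mapping.keys m \<subseteq> grid n r}"

definition ideal_gen :: "'k::field gpoly set \<Rightarrow> 'k gpoly set \<Rightarrow> 'k gpoly set" where
  "ideal_gen R G = {p. \<exists>F c. finite F \<and> F \<subseteq> G \<and> (\<forall>g\<in>F. c g \<in> R) \<and> p = (\<Sum>g\<in>F. c g * g)}"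

definition fpol :: "nat \<Rightarrow> (nat \<Rightarrow> nat) \<Rightarrow> (nat \<Rightarrow> nat) \<Rightarrow> 'k::field gpoly" where
  "fpol i a b = Xv a * Xv b - Xv (sw i a b) * Xv (sw i b a)"

definition switchable :: "nat \<Rightarrow> (nat \<Rightarrow> nat) \<Rightarrow> nat \<Rightarrow> (nat \<Rightarrow> nat) set \<Rightarrow> bool" where
  "switchable n r t S \<longleftrightarrow> S \<subseteq> grid n r \<and>
     (\<forall>a\<in>S. \<forall>b\<in>S. hdist n a b = 2 \<longrightarrow> (\<forall>i\<in>{1..t}. sw i a b \<in> S))"

definition connected_in :: "nat \<Rightarrow> (nat \<Rightarrow> nat) set \<Rightarrow> (nat \<Rightarrow> nat) \<Rightarrow> (nat \<Rightarrow> nat) \<Rightarrow> bool" where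
  "connected_in n S a b \<longleftrightarrow> a \<in> S \<and> b \<in> S \<and>
     (\<lambda>x y. x \<in> S \<and> y \<in> S \<and> hdist n x y \<le> 1)\<^sup>*\<^sup>* a b"

definition PS :: "nat \<Rightarrow> (nat \<Rightarrow> nat) \<Rightarrow> nat \<Rightarrow> (nat \<Rightarrow> nat) set \<Rightarrow> 'k::field gpoly set" where
  "PS n r t S = ideal_gen (polyring n r)
     ({Xv a | a. a \<in> grid n r \<and> a \<notin> S} \<union>
      {fpol i a b | i a b. i \<in> {1..t} \<and> connected_in n S a b})"

definition maximal_switchable ::
  "'k::field itself \<Rightarrow> nat \<Rightarrow> (nat \<Rightarrow> nat) \<Rightarrow> nat \<Rightarrow> (nat \<Rightarrow> nat) set \<Rightarrow> bool" where
  "maximal_switchable _ n r t S \<longleftrightarrow> switchable n r t S \<and>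
     (\<forall>T. switchable n r t T \<and> S \<subset> T \<longrightarrow>
        \<not> ((PS n r t S :: 'k gpoly set) \<subseteq> PS n r t T) \<and>
        \<not> ((PS n r t T :: 'k gpoly set) \<subseteq> PS n r t S))"

end

theory Submission
  imports Defs
begin

lemma polyring_one: "(1::'k::field gpoly) \<in> polyring n r"
  by (simp add: polyring_def)

lemma polyring_zero: "(0::'k::field gpoly) \<in> polyring n r"
  by (simp add: polyring_def)

lemma polyring_add: "p \<in> polyring n r \<Longrightarrow> q \<in> polyring n r \<Longrightarrow> (p + q :: 'k::field gpoly) \<in> polyring n r"
  unfolding polyring_def using keys_add[of p q] by blast

lemma polyring_uminus: "p \<in> polyring n r \<Longrightarrow> (- p :: 'k::field gpoly) \<in> polyring n r"
  unfolding polyring_def by (simp add: keys_minus)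

lemma polyring_mult: "p \<in> polyring n r \<Longrightarrow> q \<in> polyring n r \<Longrightarrow> (p * q :: 'k::field gpoly) \<in> polyring n r"
proof -
  assume p: "p \<in> polyring n r" and q: "q \<in> polyring n r"
  have "Poly_Mapping.keys m \<subseteq> grid n r" if m: "m \<in> Poly_Mapping.keys (p * q)" for m
  proof -
    obtain a b where "m = a + b" "a \<in> Poly_Mapping.keys p" "b \<in> Poly_Mapping.keys q"
      using m keys_mult[of p q] by blast
    then show ?thesis using p q keys_add[of a b] unfolding polyring_def by blast
  qed
  then show ?thesis unfolding polyring_def by blast
qed

lemma Xv_polyring: "a \<in> grid n r \<Longrightarrow> (Xv a :: 'k::field gpoly) \<in> polyring n r"
  by (simp add: polyring_def Xv_def)

lemma ideal_zero: "0 \<in> ideal_gen R G"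
  unfolding ideal_gen_def by (rule CollectI, rule exI[of _ "{}"]) auto

lemma ideal_gen_mult: "c \<in> R \<Longrightarrow> g \<in> G \<Longrightarrow> c * g \<in> ideal_gen R G"
  unfolding ideal_gen_def by (rule CollectI, rule exI[of _ "{g}"], rule exI[of _ "\<lambda>_. c"]) auto

lemma ideal_gen_add:
  assumes "p \<in> ideal_gen (polyring n r) G" "q \<in> ideal_gen (polyring n r) G"
  shows "(p + q :: 'k::field gpoly) \<in> ideal_gen (polyring n r) G"
proof -
  obtain F1 c1 where 1: "finite F1" "F1 \<subseteq> G" "\<forall>g\<in>F1. c1 g \<in> polyring n r" "p = (\<Sum>g\<in>F1. c1 g * g)"
    using assms(1) unfolding ideal_gen_def by blast
  obtain F2 c2 where 2: "finite F2" "F2 \<subseteq> G" "\<forall>g\<in>F2. c2 g \<in> polyring n r" "q = (\<Sum>g\<in>F2. c2 g * g)"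
    using assms(2) unfolding ideal_gen_def by blast
  define d1 where "d1 g = (if g \<in> F1 then c1 g else 0)" for g
  define d2 where "d2 g = (if g \<in> F2 then c2 g else 0)" for g
  have s1: "p = (\<Sum>g\<in>F1 \<union> F2. d1 g * g)"
    unfolding 1(4) using 1(1) 2(1)
    by (intro sum.mono_neutral_cong_left) (auto simp: d1_def)
  have s2: "q = (\<Sum>g\<in>F1 \<union> F2. d2 g * g)"
    unfolding 2(4) using 1(1) 2(1)
    by (intro sum.mono_neutral_cong_left) (auto simp: d2_def)
  have e: "p + q = (\<Sum>g\<in>F1 \<union> F2. (\<lambda>g. d1 g + d2 g) g * g)"
    unfolding s1 s2 by (simp add: sum.distrib distrib_right)
  have c: "\<forall>g\<in>F1 \<union> F2. (\<lambda>g. d1 g + d2 g) g \<in> polyring n r"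
  proof
    fix g assume "g \<in> F1 \<union> F2"
    have "d1 g \<in> polyring n r" using 1(3) unfolding d1_def by (simp add: polyring_zero)
    moreover have "d2 g \<in> polyring n r" using 2(3) unfolding d2_def by (simp add: polyring_zero)
    ultimately show "(\<lambda>g. d1 g + d2 g) g \<in> polyring n r" by (simp add: polyring_add)
  qed
  have f: "finite (F1 \<union> F2)" "F1 \<union> F2 \<subseteq> G" using 1 2 by auto
  show ?thesis unfolding ideal_gen_def
    by (rule CollectI, rule exI[of _ "F1 \<union> F2"], rule exI[of _ "\<lambda>g. d1 g + d2 g"]) (use f c e in simp)
qed

lemma ideal_gen_uminus:
  assumes "p \<in> ideal_gen (polyring n r) G"
  shows "(- p :: 'k::field gpoly) \<in> ideal_gen (polyring n r) G"
proof -
  obtain F c where 1: "finite F" "F \<subseteq> G" "\<forall>g\<in>F. c g \<in> polyring n r" "p = (\<Sum>g\<in>F. c g * g)"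
    using assms(1) unfolding ideal_gen_def by blast
  have "- p = (\<Sum>g\<in>F. (- c g) * g)" unfolding 1(4) by (simp add: sum_negf)
  moreover have "\<forall>g\<in>F. - c g \<in> polyring n r" using 1(3) by (auto intro: polyring_uminus)
  ultimately show ?thesis unfolding ideal_gen_def
    by (intro CollectI exI[of _ F] exI[of _ "\<lambda>g. - c g"]) (use 1 in simp)
qed

lemma ideal_gen_multl:
  assumes "p \<in> ideal_gen (polyring n r) G" "c \<in> polyring n r"
  shows "(c * p :: 'k::field gpoly) \<in> ideal_gen (polyring n r) G"
proof -
  obtain F d where 1: "finite F" "F \<subseteq> G" "\<forall>g\<in>F. d g \<in> polyring n r" "p = (\<Sum>g\<in>F. d g * g)"
    using assms(1) unfolding ideal_gen_def by blast
  have "c * p = (\<Sum>g\<in>F. (c * d g) * g)" unfolding 1(4) by (simp add: sum_distrib_left mult.assoc)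
  moreover have "\<forall>g\<in>F. c * d g \<in> polyring n r" using 1(3) assms(2) by (auto intro: polyring_mult)
  ultimately show ?thesis unfolding ideal_gen_def
    by (intro CollectI exI[of _ F] exI[of _ "\<lambda>g. c * d g"]) (use 1 in simp)
qed

lemma ideal_gen_sub:
  assumes "\<And>g. g \<in> G \<Longrightarrow> g \<in> ideal_gen (polyring n r) H"
  shows "ideal_gen (polyring n r) G \<subseteq> (ideal_gen (polyring n r) H :: 'k::field gpoly set)"
proof
  fix p :: "'k gpoly" assume "p \<in> ideal_gen (polyring n r) G"
  then obtain F c where 1: "finite F" "F \<subseteq> G" "\<forall>g\<in>F. c g \<in> polyring n r" "p = (\<Sum>g\<in>F. c g * g)"
    unfolding ideal_gen_def by blast
  have "F \<subseteq> G \<Longrightarrow> (\<Sum>g\<in>F. c g * g) \<in> ideal_gen (polyring n r) H"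
    using 1(1,3)
  proof (induction F rule: finite_induct)
    case empty then show ?case by (simp add: ideal_zero)
  next
    case (insert x F)
    then show ?case
      by (simp add: ideal_gen_add ideal_gen_multl assms)
  qed
  then show "p \<in> ideal_gen (polyring n r) H" using 1 by simp
qed

lemma sw_grid: "a \<in> grid n r \<Longrightarrow> b \<in> grid n r \<Longrightarrow> sw i a b \<in> grid n r"
  unfolding grid_def sw_def by auto

lemma sw_sw1: "sw i (sw i a b) (sw i b a) = a"
  unfolding sw_def by auto

lemma sw_sw2: "sw i (sw i b a) (sw i a b) = b"
  unfolding sw_def by auto

theorem proposition4p8:
  fixes n t :: nat and r :: "nat \<Rightarrow> nat" and S :: "(nat \<Rightarrow> nat) set"
  assumes "1 \<le> t" and "t \<le> n"
    and "\<forall>i\<in>{1..n}. 0 < r i"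
    and "maximal_switchable TYPE('k::field) n r t S"
    and "\<forall>a\<in>S. \<forall>b\<in>S. connected_in n S a b"
  shows "S = grid n r"
proof (rule ccontr)
  assume ne: "S \<noteq> grid n r"
  have swS: "switchable n r t S" and max: "\<forall>T. switchable n r t T \<and> S \<subset> T \<longrightarrow>
        \<not> ((PS n r t S :: 'k gpoly set) \<subseteq> PS n r t T) \<and>
        \<not> ((PS n r t T :: 'k gpoly set) \<subseteq> PS n r t S)"
    using assms(4) unfolding maximal_switchable_def by simp_all
  have Sg: "S \<subseteq> grid n r" using swS unfolding switchable_def by blast
  have swG: "switchable n r t (grid n r)" unfolding switchable_def using sw_grid by blast
  let ?G = "{Xv a | a. a \<in> grid n r \<and> a \<notin> S} \<union>
      {fpol i a b | i a b. i \<in> {1..t} \<and> connected_in n S a b} :: 'k gpoly set"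
  let ?I = "ideal_gen (polyring n r) ?G"
  have PSI: "PS n r t S = ?I" unfolding PS_def by simp
  have prod: "Xv a * Xv b \<in> ?I" if "a \<in> grid n r" "b \<in> grid n r" "a \<notin> S \<or> b \<notin> S" for a b
  proof (cases "a \<notin> S")
    case True
    have "Xv b * Xv a \<in> ?I"
      by (rule ideal_gen_mult) (use that True in \<open>auto intro: Xv_polyring\<close>)
    then show ?thesis by (simp add: mult.commute)
  next
    case False
    then have "b \<notin> S" using that by blast
    show "Xv a * Xv b \<in> ?I"
      by (rule ideal_gen_mult) (use that \<open>b \<notin> S\<close> in \<open>auto intro: Xv_polyring\<close>)
  qed
  have gen: "g \<in> ?I" if "g \<in> ?G" for g
  proof -
    have "(1 * g) \<in> ?I" by (rule ideal_gen_mult[OF polyring_one that])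
    then show ?thesis by simp
  qed
  have "PS n r t (grid n r) \<subseteq> (PS n r t S :: 'k gpoly set)"
    unfolding PSI unfolding PS_def
  proof (rule ideal_gen_sub)
    fix g :: "'k gpoly" assume "g \<in> {Xv a | a. a \<in> grid n r \<and> a \<notin> grid n r} \<union>
      {fpol i a b | i a b. i \<in> {1..t} \<and> connected_in n (grid n r) a b}"
    moreover have "{Xv a | a. a \<in> grid n r \<and> a \<notin> grid n r} = ({} :: 'k gpoly set)" by simp
    ultimately have "g \<in> {fpol i a b | i a b. i \<in> {1..t} \<and> connected_in n (grid n r) a b}" by simp
    then obtain i a b where g0: "g = fpol i a b" "i \<in> {1..t}" "connected_in n (grid n r) a b"
      by (auto simp only: mem_Collect_eq)
    then have g: "g = fpol i a b" "i \<in> {1..t}" "a \<in> grid n r" "b \<in> grid n r"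
      unfolding connected_in_def by simp_all
    define c where "c = sw i a b"
    define d where "d = sw i b a"
    have cd: "c \<in> grid n r" "d \<in> grid n r" using g sw_grid unfolding c_def d_def by blast+
    show "g \<in> ?I"
    proof (cases "a \<in> S \<and> b \<in> S")
      case True
      then have "connected_in n S a b" using assms(5) by simp
      then have "g \<in> ?G" unfolding g(1) using g(2) by (intro UnI2 CollectI exI conjI) (rule refl, assumption+)
      then show ?thesis by (rule gen)
    next
      case ab: False
      show ?thesis
      proof (cases "c \<in> S \<and> d \<in> S")
        case True
        have "connected_in n S c d" using assms(5) True by simp
        then have "fpol i c d \<in> ?G" using g(2) by (intro UnI2 CollectI exI conjI) (rule refl, assumption+)
        then have "fpol i c d \<in> ?I" by (rule gen)
        then have "- fpol i c d \<in> ?I" by (rule ideal_gen_uminus)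
        moreover have "- fpol i c d = g"
          unfolding g(1) fpol_def c_def d_def sw_sw1 sw_sw2 by simp
        ultimately show ?thesis by simp
      next
        case False
        have 1: "Xv a * Xv b \<in> ?I" using prod[of a b] g(3,4) ab by simp
        have 2: "Xv c * Xv d \<in> ?I" using prod[of c d] cd False by simp
        have "Xv a * Xv b + - (Xv c * Xv d) \<in> ?I"
          by (intro ideal_gen_add ideal_gen_uminus 1 2)
        then show ?thesis unfolding g(1) fpol_def c_def d_def by simp
      qed
    qed
  qed
  moreover have "S \<subset> grid n r" using Sg ne by blast
  ultimately show False using spec[OF max, of "grid n r"] swG by simp
qed

end
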